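(* Let $r,m$ be positive integers with $m\ge20r$ and let $B=(T,D,\lambda)$ be an upwards closed quasi-bush with no coat hangers. If $\mathrm{wcol}_{9r}(B,\prec)\le m$ for some linear order $\prec$ on $V(T)$, and for every $w\in V(T)$ we have $|\mathrm{IN}(w,B)|\le m$ or $|\mathrm{OUT}(w,B)|\le m$, then $G(B)$ does not contain an $r$-shallow topological minor isomorphic to a clique on $m^{7}$ vertices.
   Context: A quasi-bush $B=(T,D,\lambda)$: a rooted tree $T$, a set $D$ of pointers from leaves of $T$ to nodes of $T$ (every leaf points to the root), and $\lambda\colon D\to\{0,1\}$. $v\le_T w$ means $v$ is an ancestor of $w$ (including $v=w$); $T(a)$ is the subtree of descendants of $a$. $G(B)$ is the directed graph on the leaves of $T$ where, for distinct leaves $u,v$ and $w$ the lowest ancestor of $v$ with $(u,w)\in D$, $(u,v)$ is an arc iff $\lambda((u,w))=1$; $w$ is the connection point of $(u,v)$. Quasi-bushes are assumed to represent undirected graphs, i.e., $G(B)$ is symmetric, and it is identified with the corresponding undirected graph. $B$ is upwards closed if $(u,w)\in D$ and $w'\le_T w$ imply $(u,w')\in D$. A coat hanger is a subtree $T(a)$ such that $a$ is neither the root nor a leaf, and some leaf $v$ has a pointer labeled $1$ to the parent of $a$ but no pointer to any node of $T(a)$. $\mathrm{IN}(w,B)$ (resp. $\mathrm{OUT}(w,B)$) is the set of all $u$ (resp. $v$) such that $w$ is the connection point of some arc $(u,v)$ of $G(B)$. $\mathrm{wcol}_{r}(B,\prec)$ is computed in the Gaifman graph of $B$ (vertex set $V(T)$,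 edges the tree edges and pointers): the maximum over $v$ of the number of $u$ such that some path of length at most $r$ from $v$ to $u$ has $u$ as its $\prec$-minimum. A graph $H$ is an $r$-shallow topological minor of $G$ if there are vertices $p(u)$, $u\in V(H)$, and internally vertex-disjoint paths of length at most $2r+1$ joining $p(u)$ and $p(v)$ for each edge $uv$ of $H$. *)

theory Defs
  imports Main
begin

text \<open>A quasi-bush B = (T, D, lambda). The rooted tree T is given by its node set,
  a parent function (irrelevant at the root) and the root. The label lambda
  takes values in bool, True standing for 1 and False for 0.\<close>

record 'a qbush =
  nodes  :: "'a set"
  parent :: "'a \<Rightarrow> 'a"
  root   :: 'a
  ptrs   :: "('a \<times> 'a) set"
  lab    :: "'a \<times> 'a \<Rightarrow> bool"

definition rooted_tree :: "'a qbush \<Rightarrow> bool" where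
  "rooted_tree B \<longleftrightarrow> finite (nodes B) \<and> root B \<in> nodes B \<and>
     (\<forall>v\<in>nodes B - {root B}. parent B v \<in> nodes B) \<and>
     (\<forall>v\<in>nodes B. \<exists>k. (parent B ^^ k) v = root B)"

definition anc :: "'a qbush \<Rightarrow> 'a \<Rightarrow> 'a \<Rightarrow> bool" where
  "anc B v w \<longleftrightarrow> w \<in> nodes B \<and>
     (\<exists>k. (parent B ^^ k) w = v \<and> (\<forall>i<k. (parent B ^^ i) w \<noteq> root B))"

definition is_leaf :: "'a qbush \<Rightarrow> 'a \<Rightarrow> bool" where
  "is_leaf B v \<longleftrightarrow> v \<in> nodes B \<and> \<not> (\<exists>c\<in>nodes B. c \<noteq> root B \<and> parent B c = v)"

definition quasi_bush :: "'a qbush \<Rightarrow> bool" where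
  "quasi_bush B \<longleftrightarrow> rooted_tree B \<and>
     ptrs B \<subseteq> {u. is_leaf B u} \<times> nodes B \<and>
     (\<forall>u. is_leaf B u \<longrightarrow> (u, root B) \<in> ptrs B)"

definition conn_point :: "'a qbush \<Rightarrow> 'a \<Rightarrow> 'a \<Rightarrow> 'a \<Rightarrow> bool" where
  "conn_point B u v w \<longleftrightarrow> anc B w v \<and> (u, w) \<in> ptrs B \<and>
     (\<forall>w'. anc B w' v \<and> (u, w') \<in> ptrs B \<longrightarrow> anc B w' w)"

definition arcG :: "'a qbush \<Rightarrow> 'a \<Rightarrow> 'a \<Rightarrow> bool" where
  "arcG B u v \<longleftrightarrow> is_leaf B u \<and> is_leaf B v \<and> u \<noteq> v \<and>
     (\<exists>w. conn_point B u v w \<and> lab B (u, w))"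

definition represents_undirected :: "'a qbush \<Rightarrow> bool" where
  "represents_undirected B \<longleftrightarrow> (\<forall>u v. arcG B u v \<longrightarrow> arcG B v u)"

definition upwards_closed :: "'a qbush \<Rightarrow> bool" where
  "upwards_closed B \<longleftrightarrow>
     (\<forall>u w w'. (u, w) \<in> ptrs B \<and> anc B w' w \<longrightarrow> (u, w') \<in> ptrs B)"

definition coat_hanger :: "'a qbush \<Rightarrow> 'a \<Rightarrow> bool" where
  "coat_hanger B a \<longleftrightarrow> a \<in> nodes B \<and> a \<noteq> root B \<and> \<not> is_leaf B a \<and>
     (\<exists>v. is_leaf B v \<and> (v, parent B a) \<in> ptrs B \<and> lab B (v, parent B a) \<and>
          (\<forall>x. anc B a x \<longrightarrow> (v, x) \<notin> ptrs B))"

definition IN :: "'a \<Rightarrow> 'a qbush \<Rightarrow> 'a set" where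
  "IN w B = {u. \<exists>v. arcG B u v \<and> conn_point B u v w}"

definition OUT :: "'a \<Rightarrow> 'a qbush \<Rightarrow> 'a set" where
  "OUT w B = {v. \<exists>u. arcG B u v \<and> conn_point B u v w}"

definition gaif_adj :: "'a qbush \<Rightarrow> 'a \<Rightarrow> 'a \<Rightarrow> bool" where
  "gaif_adj B x y \<longleftrightarrow> x \<in> nodes B \<and> y \<in> nodes B \<and> x \<noteq> y \<and>
     ((x \<noteq> root B \<and> parent B x = y) \<or> (y \<noteq> root B \<and> parent B y = x) \<or>
      (x, y) \<in> ptrs B \<or> (y, x) \<in> ptrs B)"

text \<open>u is weakly r-reachable from v w.r.t. the order le (reflexive form of \<prec>):
  some path of length at most r from v to u in the Gaifman graph has u as its minimum.\<close>
definition wreach :: "'a qbush \<Rightarrow> ('a \<times> 'a) set \<Rightarrow> nat \<Rightarrow> 'a \<Rightarrow> 'a \<Rightarrow> bool" where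
  "wreach B le r v u \<longleftrightarrow> (\<exists>xs. xs \<noteq> [] \<and> hd xs = v \<and> last xs = u \<and> distinct xs \<and>
     length xs \<le> r + 1 \<and> set xs \<subseteq> nodes B \<and>
     (\<forall>i. Suc i < length xs \<longrightarrow> gaif_adj B (xs ! i) (xs ! Suc i)) \<and>
     (\<forall>x\<in>set xs. (u, x) \<in> le))"

definition wcol :: "nat \<Rightarrow> 'a qbush \<Rightarrow> ('a \<times> 'a) set \<Rightarrow> nat" where
  "wcol r B le = Max ((\<lambda>v. card {u. wreach B le r v u}) ` nodes B)"

definition gpath :: "'a qbush \<Rightarrow> 'a list \<Rightarrow> bool" where
  "gpath B xs \<longleftrightarrow> xs \<noteq> [] \<and> distinct xs \<and> (\<forall>x\<in>set xs. is_leaf B x) \<and>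
     (\<forall>i. Suc i < length xs \<longrightarrow> arcG B (xs ! i) (xs ! Suc i))"

definition interior :: "'a list \<Rightarrow> 'a set" where
  "interior xs = set (butlast (tl xs))"

text \<open>G(B) contains an r-shallow topological minor isomorphic to the clique K_n:
  distinct branch vertices p i (i < n) and, for each pair i < j, a path of length
  at most 2r+1 from p i to p j; the paths are internally vertex-disjoint, i.e. an
  interior vertex of one path lies on no other path.\<close>
definition has_shallow_top_clique :: "'a qbush \<Rightarrow> nat \<Rightarrow> nat \<Rightarrow> bool" where
  "has_shallow_top_clique B r n \<longleftrightarrow> (\<exists>(p :: nat \<Rightarrow> 'a) (P :: nat \<Rightarrow> nat \<Rightarrow> 'a list).
     inj_on p {..<n} \<and> (\<forall>i<n. is_leaf B (p i)) \<and>
     (\<forall>i j. i < j \<and> j < n \<longrightarrow> gpath B (P i j) \<and> hd (P i j) = p i \<and>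
        last (P i j) = p j \<and> length (P i j) \<le> 2 * r + 2) \<and>
     (\<forall>i j k l. i < j \<and> j < n \<and> k < l \<and> l < n \<and> (i, j) \<noteq> (k, l) \<longrightarrow>
        interior (P i j) \<inter> set (P k l) = {}))"

end

theory Submission
  imports Defs
begin


lemma rt_nodes:
  assumes "rooted_tree B" "x \<in> nodes B" "\<forall>i<k. (parent B ^^ i) x \<noteq> root B"
  shows "(parent B ^^ k) x \<in> nodes B"
  using assms(3)
proof (induction k)
  case 0 then show ?case using assms(2) by simp
next
  case (Suc k)
  then have "(parent B ^^ k) x \<in> nodes B" "(parent B ^^ k) x \<noteq> root B" by auto
  then show ?case using assms(1) unfolding rooted_tree_def by auto
qed

lemma funpow_period:
  assumes "(f ^^ Suc j) a = a"
  shows "(f ^^ t) a = (f ^^ (t mod Suc j)) a"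
proof (induction t rule: less_induct)
  case (less t)
  show ?case
  proof (cases "t < Suc j")
    case True then show ?thesis by simp
  next
    case False
    then have t: "t = (t - Suc j) + Suc j" by simp
    have "(f ^^ t) a = (f ^^ (t - Suc j)) ((f ^^ Suc j) a)"
      by (subst t, subst funpow_add) simp
    also have "\<dots> = (f ^^ (t - Suc j)) a" using assms by simp
    also have "\<dots> = (f ^^ ((t - Suc j) mod Suc j)) a" using less False by simp
    also have "(t - Suc j) mod Suc j = t mod Suc j" using False
      by (simp add: le_mod_geq)
    finally show ?thesis .
  qed
qed

lemma rt_no_cycle:
  assumes "rooted_tree B" "a \<in> nodes B" "(parent B ^^ Suc j) a = a"
    "\<forall>t\<le>j. (parent B ^^ t) a \<noteq> root B"
  shows False
proof -
  obtain K where "(parent B ^^ K) a = root B" using assms(1,2) unfolding rooted_tree_def by blast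
  moreover have "(parent B ^^ K) a = (parent B ^^ (K mod Suc j)) a"
    using funpow_period[OF assms(3)] .
  moreover have "K mod Suc j \<le> j" by (simp add: less_Suc_eq_le)
  ultimately show False using assms(4) by metis
qed

lemma key:
  assumes qb: "quasi_bush B" and uc: "upwards_closed B" and nch: "\<forall>a. \<not> coat_hanger B a"
    and lu: "is_leaf B u" and lv: "is_leaf B v" and cp: "conn_point B u v w" and lb: "lab B (u, w)"
  shows "w = v \<or> (v \<noteq> root B \<and> parent B v = w)"
proof -
  have rt: "rooted_tree B" using qb unfolding quasi_bush_def by simp
  have vn: "v \<in> nodes B" using lv unfolding is_leaf_def by simp
  from cp obtain k where k: "(parent B ^^ k) v = w" "\<forall>i<k. (parent B ^^ i) v \<noteq> root B"
    unfolding conn_point_def anc_def by blast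
  have uw: "(u, w) \<in> ptrs B" using cp unfolding conn_point_def by blast
  show ?thesis
  proof (cases k)
    case 0 then show ?thesis using k by simp
  next
    case (Suc k')
    define a where "a = (parent B ^^ k') v"
    have an: "a \<in> nodes B" unfolding a_def using rt_nodes[OF rt vn, of k'] k(2) Suc by auto
    have anr: "a \<noteq> root B" unfolding a_def using k(2) Suc by auto
    have pa: "parent B a = w" unfolding a_def using k(1) Suc by simp
    show ?thesis
    proof (cases k')
      case 0 then show ?thesis using anr pa a_def by simp
    next
      case (Suc k'')
      define c where "c = (parent B ^^ k'') v"
      have cn: "c \<in> nodes B" unfolding c_def using rt_nodes[OF rt vn, of k''] k(2) Suc \<open>k = Suc k'\<close> by auto
      have cnr: "c \<noteq> root B" unfolding c_def using k(2) Suc \<open>k = Suc k'\<close> by auto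
      have pc: "parent B c = a" unfolding c_def a_def using Suc by simp
      have nl: "\<not> is_leaf B a" unfolding is_leaf_def using cn cnr pc by blast
      have "\<not> coat_hanger B a" using nch by blast
      then have "\<exists>x. anc B a x \<and> (u, x) \<in> ptrs B"
        unfolding coat_hanger_def using an anr nl lu uw lb pa by blast
      then obtain x where x: "anc B a x" "(u, x) \<in> ptrs B" by blast
      have ua: "(u, a) \<in> ptrs B" using uc x unfolding upwards_closed_def by blast
      have ava: "anc B a v" unfolding anc_def a_def using vn k(2) \<open>k = Suc k'\<close> by auto
      have "anc B a w" using cp ua ava unfolding conn_point_def by blast
      then obtain j where j: "(parent B ^^ j) w = a" "\<forall>i<j. (parent B ^^ i) w \<noteq> root B"
        unfolding anc_def by blast
      have cyc: "(parent B ^^ Suc j) a = a" using j(1) pa by (simp add: funpow_Suc_right del: funpow.simps)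
      have "\<forall>t\<le>j. (parent B ^^ t) a \<noteq> root B"
      proof (intro allI impI)
        fix t assume "t \<le> j"
        show "(parent B ^^ t) a \<noteq> root B"
        proof (cases t)
          case 0 then show ?thesis using anr by simp
        next
          case (Suc t')
          then have "(parent B ^^ t) a = (parent B ^^ t') w" using pa by (simp add: funpow_Suc_right del: funpow.simps)
          then show ?thesis using j(2) Suc \<open>t \<le> j\<close> by auto
        qed
      qed
      then show ?thesis using rt_no_cycle[OF rt an cyc] by blast
    qed
  qed
qed


definition RR :: "'a qbush \<Rightarrow> 'a \<Rightarrow> 'a \<Rightarrow> bool" where
  "RR B x y \<longleftrightarrow> x = y \<or> gaif_adj B x y"

lemma RR_sym: "RR B x y \<Longrightarrow> RR B y x"
  unfolding RR_def gaif_adj_def by auto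

lemma shorten:
  "successively P xs \<Longrightarrow> xs \<noteq> [] \<Longrightarrow> \<exists>ys. successively P ys \<and> distinct ys \<and> ys \<noteq> [] \<and>
     hd ys = hd xs \<and> last ys = last xs \<and> set ys \<subseteq> set xs \<and> length ys \<le> length xs"
proof (induction xs rule: length_induct)
  case (1 xs)
  show ?case
  proof (cases "distinct xs")
    case True then show ?thesis using 1 by blast
  next
    case False
    then obtain as bs cs y where xs: "xs = as @ [y] @ bs @ [y] @ cs" using not_distinct_decomp by blast
    define xs' where "xs' = as @ [y] @ cs"
    have s: "successively P xs'" using 1(2) unfolding xs xs'_def
      by (auto simp: successively_append_iff successively_Cons)
    have "length xs' < length xs" unfolding xs xs'_def by simp
    moreover have "xs' \<noteq> []" unfolding xs'_def by simp
    ultimately obtain ys where ys: "successively P ys \<and> distinct ys \<and> ys \<noteq> [] \<and>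
     hd ys = hd xs' \<and> last ys = last xs' \<and> set ys \<subseteq> set xs' \<and> length ys \<le> length xs'"
      using 1(1) s by blast
    have "hd xs' = hd xs" "last xs' = last xs" "set xs' \<subseteq> set xs"
      unfolding xs xs'_def by (auto simp: hd_append)
    then show ?thesis using ys \<open>length xs' < length xs\<close> by (intro exI[of _ ys]) auto
  qed
qed

lemma wreach_of_walk:
  assumes "successively (RR B) xs" "xs \<noteq> []" "set xs \<subseteq> nodes B"
    "\<forall>x\<in>set xs. (u, x) \<in> le" "last xs = u" "length xs \<le> d + 1"
  shows "wreach B le d (hd xs) u"
proof -
  obtain ys where ys: "successively (RR B) ys" "distinct ys" "ys \<noteq> []"
     "hd ys = hd xs" "last ys = last xs" "set ys \<subseteq> set xs" "length ys \<le> length xs"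
    using shorten[OF assms(1,2)] by blast
  have "\<forall>i. Suc i < length ys \<longrightarrow> gaif_adj B (ys ! i) (ys ! Suc i)"
  proof (intro allI impI)
    fix i assume i: "Suc i < length ys"
    have "RR B (ys ! i) (ys ! Suc i)" using successively_nth[OF ys(1) i] .
    moreover have "ys ! i \<noteq> ys ! Suc i" using ys(2) i by (simp add: nth_eq_iff_index_eq)
    ultimately show "gaif_adj B (ys ! i) (ys ! Suc i)" unfolding RR_def by blast
  qed
  then show ?thesis unfolding wreach_def using ys assms
    by (intro exI[of _ ys]) auto
qed

definition midp :: "'a qbush \<Rightarrow> 'a \<Rightarrow> 'a \<Rightarrow> 'a" where
  "midp B u v = (SOME w. conn_point B u v w \<and> lab B (u, w))"

lemma midp_cp: "arcG B u v \<Longrightarrow> conn_point B u v (midp B u v) \<and> lab B (u, midp B u v)"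
  unfolding midp_def arcG_def by (rule someI_ex) blast

fun Wset :: "'a qbush \<Rightarrow> 'a list \<Rightarrow> 'a set" where
  "Wset B [] = {}"
| "Wset B [x] = {x}"
| "Wset B (x # y # xs) = insert x (insert (midp B x y) (Wset B (y # xs)))"

definition goodmid :: "'a qbush \<Rightarrow> bool" where
  "goodmid B \<longleftrightarrow> (\<forall>u v. arcG B u v \<longrightarrow> RR B u (midp B u v) \<and> RR B (midp B u v) v \<and>
      midp B u v \<in> nodes B \<and> u \<in> nodes B \<and> v \<in> nodes B)"

lemma from_hd:
  assumes "goodmid B"
  shows "successively (arcG B) Q \<Longrightarrow> Q \<noteq> [] \<Longrightarrow> z \<in> Wset B Q \<Longrightarrow>
    \<exists>ws. successively (RR B) ws \<and> ws \<noteq> [] \<and> hd ws = hd Q \<and> last ws = z \<and>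
       set ws \<subseteq> Wset B Q \<and> length ws \<le> 2 * length Q"
proof (induction Q rule: induct_list012)
  case 1 then show ?case by simp
next
  case (2 x) then show ?case by (intro exI[of _ "[x]"]) auto
next
  case (3 x y xs)
  have a: "arcG B x y" and s: "successively (arcG B) (y # xs)" using "3.prems"(1) by auto
  have g: "RR B x (midp B x y)" "RR B (midp B x y) y" using assms a unfolding goodmid_def by auto
  consider "z = x" | "z = midp B x y" | "z \<in> Wset B (y # xs)" using "3.prems"(3) by auto
  then show ?case
  proof cases
    case 1 then show ?thesis by (intro exI[of _ "[x]"]) auto
  next
    case 2 then show ?thesis using g by (intro exI[of _ "[x, midp B x y]"]) auto
  next
    case 3
    then obtain ws where ws: "successively (RR B) ws" "ws \<noteq> []" "hd ws = y" "last ws = z"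
       "set ws \<subseteq> Wset B (y # xs)" "length ws \<le> 2 * length (y # xs)"
      using "3.IH"(2) s by auto
    show ?thesis
      using ws g by (intro exI[of _ "[x, midp B x y] @ ws"])
        (auto simp: successively_append_iff successively_Cons)
  qed
qed

lemma from_last:
  assumes "goodmid B"
  shows "successively (arcG B) Q \<Longrightarrow> Q \<noteq> [] \<Longrightarrow> z \<in> Wset B Q \<Longrightarrow>
    \<exists>ws. successively (RR B) ws \<and> ws \<noteq> [] \<and> hd ws = last Q \<and> last ws = z \<and>
       set ws \<subseteq> Wset B Q \<and> length ws \<le> 2 * length Q"
proof (induction Q arbitrary: z rule: induct_list012)
  case 1 then show ?case by simp
next
  case (2 x) then show ?case by (intro exI[of _ "[x]"]) auto
next
  case (3 x y xs)
  have a: "arcG B x y" and s: "successively (arcG B) (y # xs)" using "3.prems"(1) by auto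
  have g: "RR B x (midp B x y)" "RR B (midp B x y) y" using assms a unfolding goodmid_def by auto
  obtain ws where ws: "successively (RR B) ws" "ws \<noteq> []" "hd ws = last (y # xs)" "last ws = y"
       "set ws \<subseteq> Wset B (y # xs)" "length ws \<le> 2 * length (y # xs)"
    using "3.IH"(2)[of y] s by (cases xs) auto
  consider "z = x" | "z = midp B x y" | "z \<in> Wset B (y # xs)" using "3.prems"(3) by auto
  then show ?case
  proof cases
    case 1 then show ?thesis using ws g RR_sym
      by (intro exI[of _ "ws @ [midp B x y, x]"]) (auto simp: successively_append_iff)
  next
    case 2 then show ?thesis using ws g RR_sym
      by (intro exI[of _ "ws @ [midp B x y]"]) (auto simp: successively_append_iff)
  next
    case 3
    then obtain ws where ws: "successively (RR B) ws" "ws \<noteq> []" "hd ws = last (y # xs)" "last ws = z"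
       "set ws \<subseteq> Wset B (y # xs)" "length ws \<le> 2 * length (y # xs)"
      using "3.IH"(2) s by blast
    then show ?thesis by (intro exI[of _ ws]) auto
  qed
qed

lemma Wset_cases:
  "successively (arcG B) Q \<Longrightarrow> z \<in> Wset B Q \<Longrightarrow> z \<in> set Q \<or>
     (\<exists>x y. x \<in> set Q \<and> y \<in> set Q \<and> arcG B x y \<and> z = midp B x y)"
proof (induction Q rule: induct_list012)
  case 1 then show ?case by simp
next
  case (2 x) then show ?case by simp
next
  case (3 x y xs)
  have s: "successively (arcG B) (y # xs)" and a: "arcG B x y" using "3.prems"(1) by auto
  consider "z = x" | "z = midp B x y" | "z \<in> Wset B (y # xs)" using "3.prems"(2) by auto
  then show ?case
  proof cases
    case 1 then show ?thesis by simp
  next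
    case 2 then show ?thesis using a by auto
  next
    case 3 then show ?thesis using "3.IH"(2) s by fastforce
  qed
qed

lemma Wset_sub:
  "goodmid B \<Longrightarrow> successively (arcG B) Q \<Longrightarrow> set Q \<subseteq> nodes B \<Longrightarrow> Wset B Q \<subseteq> nodes B"
  using Wset_cases[of B Q] unfolding goodmid_def by blast

lemma Wset_finite: "finite (Wset B Q)"
  by (induction Q rule: induct_list012) auto

lemma Wset_hd: "Q \<noteq> [] \<Longrightarrow> hd Q \<in> Wset B Q"
  by (cases Q; cases "tl Q") auto

lemma lin_min:
  assumes "finite S" "S \<noteq> {}" "S \<subseteq> A" "linear_order_on A le"
  shows "\<exists>x\<in>S. \<forall>y\<in>S. (x, y) \<in> le"
  using assms(1,2,3)
proof (induction S rule: finite_ne_induct)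
  case (singleton x)
  then show ?case using assms(4) unfolding linear_order_on_def partial_order_on_def
      preorder_on_def refl_on_def by auto
next
  case (insert x F)
  then obtain z where z: "z \<in> F" "\<forall>y\<in>F. (z, y) \<in> le" by auto
  have xA: "x \<in> A" and zA: "z \<in> A" using insert z by auto
  have tot: "(x, z) \<in> le \<or> (z, x) \<in> le" using assms(4) xA zA
    unfolding linear_order_on_def total_on_def partial_order_on_def preorder_on_def refl_on_def
    by (cases "x = z") auto
  have tr: "trans le" using assms(4)
    unfolding linear_order_on_def partial_order_on_def preorder_on_def by auto
  have rx: "(x, x) \<in> le" "(z, z) \<in> le" using assms(4) xA zA unfolding linear_order_on_def partial_order_on_def
      preorder_on_def refl_on_def by auto
  from tot show ?case
  proof
    assume xz: "(x, z) \<in> le"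
    have "\<forall>y\<in>F. (x, y) \<in> le" using z(2) xz tr by (meson transD)
    then show ?thesis using rx by auto
  next
    assume "(z, x) \<in> le"
    then show ?thesis using z rx by auto
  qed
qed

lemma set_ends_interior:
  "xs \<noteq> [] \<Longrightarrow> set xs \<subseteq> insert (hd xs) (insert (last xs) (interior xs))"
proof (cases xs)
  case Nil then show ?thesis by simp
next
  case (Cons x ys)
  show ?thesis
  proof (cases ys rule: rev_cases)
    case Nil then show ?thesis using Cons by simp
  next
    case (snoc zs y) then show ?thesis using Cons unfolding interior_def by auto
  qed
qed


lemma card_insert_le_Suc: "finite A \<Longrightarrow> card (insert x A) \<le> Suc (card A)"
  by (simp add: card_insert_if)

theorem lemma7p33:
  fixes r m :: nat and B :: "'a qbush" and le :: "('a \<times> 'a) set"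
  assumes "r > 0" and "m > 0" and "m \<ge> 20 * r"
    and "quasi_bush B" and "represents_undirected B"
    and "upwards_closed B" and "\<forall>a. \<not> coat_hanger B a"
    and "linear_order_on (nodes B) le"
    and "wcol (9 * r) B le \<le> m"
    and "\<forall>w\<in>nodes B. card (IN w B) \<le> m \<or> card (OUT w B) \<le> m"
  shows "\<not> has_shallow_top_clique B r (m ^ 7)"
proof
  assume "has_shallow_top_clique B r (m ^ 7)"
  define N where "N = m ^ 7"
  have "\<exists>(p :: nat \<Rightarrow> 'a) (P :: nat \<Rightarrow> nat \<Rightarrow> 'a list). inj_on p {..<N} \<and> (\<forall>i<N. is_leaf B (p i)) \<and>
     (\<forall>i j. i < j \<and> j < N \<longrightarrow> gpath B (P i j) \<and> hd (P i j) = p i \<and>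
        last (P i j) = p j \<and> length (P i j) \<le> 2 * r + 2) \<and>
     (\<forall>i j k l. i < j \<and> j < N \<and> k < l \<and> l < N \<and> (i, j) \<noteq> (k, l) \<longrightarrow>
        interior (P i j) \<inter> set (P k l) = {})"
    using \<open>has_shallow_top_clique B r (m ^ 7)\<close> unfolding has_shallow_top_clique_def N_def .
  then obtain p P where H: "inj_on p {..<N} \<and> (\<forall>i<N. is_leaf B (p i)) \<and>
     (\<forall>i j. i < j \<and> j < N \<longrightarrow> gpath B (P i j) \<and> hd (P i j) = p i \<and>
        last (P i j) = p j \<and> length (P i j) \<le> 2 * r + 2) \<and>
     (\<forall>i j k l. i < j \<and> j < N \<and> k < l \<and> l < N \<and> (i, j) \<noteq> (k, l) \<longrightarrow>
        interior (P i j) \<inter> set (P k l) = {})" by (elim exE)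
  have pinj: "inj_on p {..<N}" using H by (rule conjunct1)
  have pl: "\<forall>i<N. is_leaf B (p i)" using H[THEN conjunct2] by (rule conjunct1)
  have pP: "\<forall>i j. i < j \<and> j < N \<longrightarrow> gpath B (P i j) \<and> hd (P i j) = p i \<and>
        last (P i j) = p j \<and> length (P i j) \<le> 2 * r + 2" using H[THEN conjunct2, THEN conjunct2] by (rule conjunct1)
  have dis: "\<forall>i j k l. i < j \<and> j < N \<and> k < l \<and> l < N \<and> (i, j) \<noteq> (k, l) \<longrightarrow>
        interior (P i j) \<inter> set (P k l) = {}" using H[THEN conjunct2, THEN conjunct2] by (rule conjunct2)
  have rt: "rooted_tree B" using assms(4) unfolding quasi_bush_def by simp
  have finN: "finite (nodes B)" using rt unfolding rooted_tree_def by simp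
  have ptrs_sub: "ptrs B \<subseteq> {u. is_leaf B u} \<times> nodes B" using assms(4) unfolding quasi_bush_def by simp
  have leafn: "\<And>u. is_leaf B u \<Longrightarrow> u \<in> nodes B" unfolding is_leaf_def by simp

  have gm: "goodmid B" unfolding goodmid_def
  proof (intro allI impI)
    fix u v assume a: "arcG B u v"
    define w where "w = midp B u v"
    have cpl: "conn_point B u v w" "lab B (u, w)" using midp_cp[OF a] w_def by auto
    have lu: "is_leaf B u" "is_leaf B v" "u \<noteq> v" using a unfolding arcG_def by auto
    have uw: "(u, w) \<in> ptrs B" using cpl(1) unfolding conn_point_def by blast
    have wn: "w \<in> nodes B" using uw ptrs_sub by auto
    have un: "u \<in> nodes B" and vn: "v \<in> nodes B" using lu leafn by auto
    have k: "w = v \<or> (v \<noteq> root B \<and> parent B v = w)"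
      using key[OF assms(4) assms(6) assms(7) lu(1,2) cpl] .
    have "RR B u w" unfolding RR_def gaif_adj_def using uw un wn by auto
    moreover have "RR B w v" unfolding RR_def gaif_adj_def using k vn wn by auto
    ultimately show "RR B u (midp B u v) \<and> RR B (midp B u v) v \<and>
      midp B u v \<in> nodes B \<and> u \<in> nodes B \<and> v \<in> nodes B" using wn un vn w_def by simp
  qed

  define Q where "Q a c = P (min a c) (max a c)" for a c
  have Qsym: "Q a c = Q c a" for a c unfolding Q_def by (simp add: min.commute max.commute)
  have QP: "gpath B (Q a c) \<and> hd (Q a c) = p (min a c) \<and> last (Q a c) = p (max a c) \<and>
      length (Q a c) \<le> 2 * r + 2" if "a < N" "c < N" "a \<noteq> c" for a c
    unfolding Q_def using pP that by (simp add: min_def max_def)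
  have Qsucc: "successively (arcG B) (Q a c)" if "a < N" "c < N" "a \<noteq> c" for a c
    using QP[OF that] unfolding gpath_def successively_conv_nth by blast
  have Qne: "Q a c \<noteq> []" if "a < N" "c < N" "a \<noteq> c" for a c
    using QP[OF that] unfolding gpath_def by blast
  have Qnodes: "set (Q a c) \<subseteq> nodes B" if "a < N" "c < N" "a \<noteq> c" for a c
    using QP[OF that] leafn unfolding gpath_def by blast
  have Qend: "p a = hd (Q a c) \<or> p a = last (Q a c)" if "a < N" "c < N" "a \<noteq> c" for a c
    using QP[OF that] by (simp add: min_def max_def)

  define Wq where "Wq a c = Wset B (Q a c)" for a c
  have Wqn: "Wq a c \<subseteq> nodes B" if "a < N" "c < N" "a \<noteq> c" for a c
    unfolding Wq_def using Wset_sub[OF gm Qsucc[OF that] Qnodes[OF that]] .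
  define mu where "mu a c = (SOME x. x \<in> Wq a c \<and> (\<forall>y\<in>Wq a c. (x, y) \<in> le))" for a c
  have mu: "mu a c \<in> Wq a c \<and> (\<forall>y\<in>Wq a c. (mu a c, y) \<in> le)" if "a < N" "c < N" "a \<noteq> c" for a c
  proof -
    have "\<exists>x\<in>Wq a c. \<forall>y\<in>Wq a c. (x, y) \<in> le"
      using lin_min[OF Wset_finite _ Wqn[OF that, unfolded Wq_def] assms(8)] Wset_hd[OF Qne[OF that]]
      unfolding Wq_def by blast
    then show ?thesis unfolding mu_def by (rule someI2_bex) blast
  qed
  have musym: "mu a c = mu c a" for a c unfolding mu_def Wq_def using Qsym by simp

  define Rch where "Rch b = {u. wreach B le (9 * r) b u}" for b
  have mureach: "mu a c \<in> Rch (p a)" if abc: "a < N" "c < N" "a \<noteq> c" for a c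
  proof -
    have lenQ: "2 * length (Q a c) \<le> 9 * r + 1" using QP[OF abc] assms(1) by linarith
    have muW: "mu a c \<in> Wset B (Q a c)" using mu[OF abc] unfolding Wq_def by blast
    have all: "\<forall>x\<in>Wset B (Q a c). (mu a c, x) \<in> le" using mu[OF abc] unfolding Wq_def by blast
    have Wn: "Wset B (Q a c) \<subseteq> nodes B" using Wqn[OF abc] unfolding Wq_def .
    from Qend[OF abc] show ?thesis
    proof
      assume h: "p a = hd (Q a c)"
      obtain ws where ws: "successively (RR B) ws" "ws \<noteq> []" "hd ws = hd (Q a c)" "last ws = mu a c"
        "set ws \<subseteq> Wset B (Q a c)" "length ws \<le> 2 * length (Q a c)"
        using from_hd[OF gm Qsucc[OF abc] Qne[OF abc] muW] by blast
      have "wreach B le (9 * r) (hd ws) (mu a c)"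
        using wreach_of_walk[OF ws(1,2), of "mu a c" le "9 * r"] ws Wn all lenQ by auto
      then show ?thesis unfolding Rch_def using h ws(3) by simp
    next
      assume h: "p a = last (Q a c)"
      obtain ws where ws: "successively (RR B) ws" "ws \<noteq> []" "hd ws = last (Q a c)" "last ws = mu a c"
        "set ws \<subseteq> Wset B (Q a c)" "length ws \<le> 2 * length (Q a c)"
        using from_last[OF gm Qsucc[OF abc] Qne[OF abc] muW] by blast
      have "wreach B le (9 * r) (hd ws) (mu a c)"
        using wreach_of_walk[OF ws(1,2), of "mu a c" le "9 * r"] ws Wn all lenQ by auto
      then show ?thesis unfolding Rch_def using h ws(3) by simp
    qed
  qed
  have Rchn: "Rch b \<subseteq> nodes B" for b
  proof
    fix u assume "u \<in> Rch b"
    then obtain xs where "xs \<noteq> []" "last xs = u" "set xs \<subseteq> nodes B"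
      unfolding Rch_def wreach_def by blast
    then show "u \<in> nodes B" using last_in_set by blast
  qed
  have Rchcard: "card (Rch (p a)) \<le> m" if "a < N" for a
  proof -
    have "p a \<in> nodes B" using pl that leafn by blast
    then have "card (Rch (p a)) \<le> wcol (9 * r) B le"
      unfolding wcol_def Rch_def using finN by (intro Max_ge) auto
    then show ?thesis using assms(9) by simp
  qed

  define small where "small z = (if card (IN z B) \<le> m then IN z B else OUT z B)" for z
  define Aset where "Aset z = insert z (small z)" for z
  have INn: "IN z B \<subseteq> nodes B" for z unfolding IN_def arcG_def using leafn by blast
  have OUTn: "OUT z B \<subseteq> nodes B" for z unfolding OUT_def arcG_def using leafn by blast
  have smallfin: "finite (small z)" for z
    unfolding small_def using finite_subset[OF INn finN] finite_subset[OF OUTn finN] by simp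
  have Afin: "finite (Aset z)" for z unfolding Aset_def using smallfin by simp
  have Acard: "card (Aset z) \<le> m + 1" if "z \<in> nodes B" for z
  proof -
    have "card (small z) \<le> m" unfolding small_def using assms(10) that by auto
    then show ?thesis unfolding Aset_def using card_insert_le_Suc[OF smallfin, of z z] by simp
  qed

  have witex: "\<exists>y. y \<in> set (Q a c) \<and> y \<in> Aset (mu a c)" if "a < N" "c < N" "a \<noteq> c" for a c
  proof -
    have "mu a c \<in> Wset B (Q a c)" using mu[OF that] unfolding Wq_def by blast
    from Wset_cases[OF Qsucc[OF that] this] show ?thesis
    proof
      assume "mu a c \<in> set (Q a c)" then show ?thesis unfolding Aset_def by blast
    next
      assume "\<exists>x y. x \<in> set (Q a c) \<and> y \<in> set (Q a c) \<and> arcG B x y \<and> mu a c = midp B x y"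
      then obtain x y where xy: "x \<in> set (Q a c)" "y \<in> set (Q a c)" "arcG B x y" "mu a c = midp B x y"
        by blast
      have "conn_point B x y (mu a c)" using midp_cp[OF xy(3)] xy(4) by simp
      then have "x \<in> IN (mu a c) B" "y \<in> OUT (mu a c) B" unfolding IN_def OUT_def using xy(3) by blast+
      then show ?thesis unfolding Aset_def small_def using xy(1,2) by (cases "card (IN (mu a c) B) \<le> m") auto
    qed
  qed

  define Good where "Good a c = (\<exists>y. y \<in> set (Q a c) \<and> y \<in> Aset (mu a c) \<and> y \<noteq> p a)" for a c
  have good_either: "Good a c \<or> Good c a" if abc: "a < N" "c < N" "a \<noteq> c" for a c
  proof -
    obtain y where y: "y \<in> set (Q a c)" "y \<in> Aset (mu a c)" using witex[OF abc] by blast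
    have pne: "p a \<noteq> p c" using pinj abc by (auto dest: inj_onD)
    show ?thesis
    proof (cases "y = p a")
      case False then show ?thesis unfolding Good_def using y by blast
    next
      case True
      then have "y \<noteq> p c" using pne by simp
      moreover have "y \<in> set (Q c a)" "y \<in> Aset (mu c a)" using y Qsym[of a c] musym[of a c] by simp_all
      ultimately show ?thesis unfolding Good_def by blast
    qed
  qed
  define wit where "wit a c = (SOME y. y \<in> set (Q a c) \<and> y \<in> Aset (mu a c) \<and> y \<noteq> p a)" for a c
  have wit: "wit a c \<in> set (Q a c) \<and> wit a c \<in> Aset (mu a c) \<and> wit a c \<noteq> p a" if "Good a c" for a c
    using that unfolding Good_def wit_def by (rule someI_ex)

  define S where "S a = {c. c < N \<and> c \<noteq> a \<and> Good a c}" for a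
  have Sfin: "finite (S a)" for a unfolding S_def by simp
  have endsQ: "y = p c" if "a < N" "c < N" "a \<noteq> c" "y \<in> set (Q a c)" "y \<noteq> p a"
    "y \<notin> interior (Q a c)" for a c y
  proof -
    have "y \<in> insert (hd (Q a c)) (insert (last (Q a c)) (interior (Q a c)))"
      using set_ends_interior[OF Qne[OF that(1-3)]] that(4) by blast
    moreover have "{p (min a c), p (max a c)} = {p a, p c}" by (cases "a \<le> c") (auto simp: min_def max_def)
    ultimately have "y \<in> {p a, p c}" using QP[OF that(1-3)] that(6) by auto
    then show ?thesis using that(5) by blast
  qed
  have Sinj: "inj_on (\<lambda>c. (mu a c, wit a c)) (S a)" if "a < N" for a
  proof (rule inj_onI)
    fix c1 c2 assume c1: "c1 \<in> S a" and c2: "c2 \<in> S a" and eq: "(mu a c1, wit a c1) = (mu a c2, wit a c2)"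
    show "c1 = c2"
    proof (rule ccontr)
      assume ne: "c1 \<noteq> c2"
      have h1: "c1 < N" "c1 \<noteq> a" "Good a c1" and h2: "c2 < N" "c2 \<noteq> a" "Good a c2"
        using c1 c2 unfolding S_def by auto
      define y where "y = wit a c1"
      have y1: "y \<in> set (Q a c1)" "y \<noteq> p a" using wit[OF h1(3)] y_def by auto
      have y2: "y \<in> set (Q a c2)" using wit[OF h2(3)] y_def eq by auto
      have mm1: "{min a c1, max a c1} = {a, c1}" by (cases "a \<le> c1") (auto simp: min_def max_def)
      have mm2: "{min a c2, max a c2} = {a, c2}" by (cases "a \<le> c2") (auto simp: min_def max_def)
      have "{a, c1} \<noteq> {a, c2}"
      proof
        assume "{a, c1} = {a, c2}"
        then have "c1 \<in> {a, c2}" by blast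
        then show False using ne h1(2) by blast
      qed
      then have pairne: "(min a c1, max a c1) \<noteq> (min a c2, max a c2)" using mm1 mm2 by force
      have lt1: "min a c1 < max a c1" "max a c1 < N" using h1 that by (auto simp: min_def max_def)
      have lt2: "min a c2 < max a c2" "max a c2 < N" using h2 that by (auto simp: min_def max_def)
      have d1: "interior (Q a c1) \<inter> set (Q a c2) = {}"
        unfolding Q_def by (rule dis[rule_format]) (use lt1 lt2 pairne in auto)
      have d2: "interior (Q a c2) \<inter> set (Q a c1) = {}"
        unfolding Q_def by (rule dis[rule_format]) (use lt1 lt2 pairne in auto)
      have "y = p c1" using endsQ[OF that h1(1) h1(2)[symmetric] y1] d1 y2 by blast
      moreover have "y = p c2" using endsQ[OF that h2(1) h2(2)[symmetric] y2 y1(2)] d2 y1(1) by blast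
      ultimately have "p c1 = p c2" by simp
      then show False using pinj h1(1) h2(1) ne by (simp add: inj_on_eq_iff)
    qed
  qed
  have Scard: "card (S a) \<le> m * (m + 1)" if "a < N" for a
  proof -
    have sub: "(\<lambda>c. (mu a c, wit a c)) ` S a \<subseteq> Sigma (Rch (p a)) Aset"
    proof
      fix z assume "z \<in> (\<lambda>c. (mu a c, wit a c)) ` S a"
      then obtain c where c: "c \<in> S a" "z = (mu a c, wit a c)" by blast
      have h: "c < N" "a \<noteq> c" "Good a c" using c(1) unfolding S_def by auto
      show "z \<in> Sigma (Rch (p a)) Aset" using mureach[OF that h(1,2)] wit[OF h(3)] c(2) by auto
    qed
    have finR: "finite (Rch (p a))" using Rchn finN finite_subset by blast
    have finS: "finite (Sigma (Rch (p a)) Aset)" using finR Afin by (rule finite_SigmaI)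
    have "card (S a) \<le> card (Sigma (Rch (p a)) Aset)"
      by (rule card_inj_on_le[OF Sinj[OF that] sub finS])
    also have "\<dots> = (\<Sum>z\<in>Rch (p a). card (Aset z))" by (rule card_SigmaI) (use finR Afin in auto)
    also have "\<dots> \<le> card (Rch (p a)) * (m + 1)"
    proof -
      have "\<And>z. z \<in> Rch (p a) \<Longrightarrow> card (Aset z) \<le> m + 1" using Acard Rchn by blast
      then have "(\<Sum>z\<in>Rch (p a). card (Aset z)) \<le> of_nat (card (Rch (p a))) * (m + 1)"
        by (rule sum_bounded_above)
      then show ?thesis by simp
    qed
    also have "\<dots> \<le> m * (m + 1)" using Rchcard[OF that] by (intro mult_right_mono) auto
    finally show ?thesis .
  qed

  define OP where "OP = Sigma {..<N} (\<lambda>a. {..<N} - {a})"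
  define GO where "GO = Sigma {..<N} S"
  have cardO: "card OP = N * (N - 1)"
  proof -
    have "card OP = (\<Sum>a<N. card ({..<N} - {a}))" unfolding OP_def by simp
    also have "\<dots> = (\<Sum>a<N. N - 1)" by simp
    finally show ?thesis by simp
  qed
  have cardGO: "card GO \<le> N * (m * (m + 1))"
  proof -
    have "card GO = (\<Sum>a<N. card (S a))" unfolding GO_def using Sfin by simp
    also have "\<dots> \<le> N * (m * (m + 1))"
      using sum_bounded_above[of "{..<N}" "\<lambda>a. card (S a)" "m * (m + 1)"] Scard by auto
    finally show ?thesis .
  qed
  have "OP \<subseteq> GO \<union> (\<lambda>(a, c). (c, a)) ` GO"
  proof
    fix z assume "z \<in> OP"
    then obtain a c where z: "z = (a, c)" "a < N" "c < N" "a \<noteq> c" unfolding OP_def by auto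
    from good_either[OF z(2-4)] show "z \<in> GO \<union> (\<lambda>(a, c). (c, a)) ` GO"
    proof
      assume "Good a c" then show ?thesis unfolding GO_def S_def using z by auto
    next
      assume "Good c a"
      then have "(c, a) \<in> GO" unfolding GO_def S_def using z by auto
      then show ?thesis using z by (auto intro: image_eqI[of _ _ "(c, a)"])
    qed
  qed
  then have "card OP \<le> card (GO \<union> (\<lambda>(a, c). (c, a)) ` GO)"
    by (intro card_mono) (auto simp: GO_def Sfin)
  also have "\<dots> \<le> card GO + card ((\<lambda>(a, c). (c, a)) ` GO)" by (rule card_Un_le)
  also have "\<dots> \<le> 2 * card GO" using card_image_le[of GO "\<lambda>(a, c). (c, a)"] by (simp add: GO_def Sfin)
  finally have "N * (N - 1) \<le> 2 * (N * (m * (m + 1)))" using cardO cardGO by linarith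
  moreover have "N > 0" unfolding N_def using assms(2) by simp
  ultimately have ineq: "N - 1 \<le> 2 * (m * (m + 1))" by (simp add: mult.left_commute)
  have m20: "m \<ge> 20" using assms(1,3) by linarith
  have "m ^ 5 \<ge> m" using assms(2) by (simp add: Suc_leI self_le_power)
  then have m5: "m ^ 5 \<ge> 20" using m20 by linarith
  have "N = m * m * m ^ 5" unfolding N_def by (simp add: numeral_eq_Suc)
  also have "\<dots> \<ge> m * m * 20" using m5 by simp
  finally have "N \<ge> 20 * (m * m)" by simp
  moreover have "m * m \<ge> 20 * m" using m20 by simp
  moreover have "2 * (m * (m + 1)) = 2 * (m * m) + 2 * m" by (simp add: algebra_simps)
  ultimately show False using ineq m20 by linarith
qed

end
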